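(* Let $\alpha\in(0,1)$ be irrational, and for $n\ge1$ let $p_n/q_n$ be its $n$th convergent. Then $$P_{q_n}(\alpha)=\prod_{r=1}^{q_n}|2\sin\pi r\alpha|=A_nB_nC_n,$$ where $$A_n=|2q_n\sin(\pi\Lambda_n)|,\qquad B_n=\Big|\prod_{t=1}^{q_n-1}\frac{s_{nt}}{2\sin(\pi t/q_n)}\Big|,\qquad C_n=\prod_{t=1}^{q_n-1}\Big(1-\frac{s_{n0}^2}{s_{nt}^2}\Big)^{1/2}.$$ Here, for $t\in\{0,1,\ldots,q_n-1\}$, $$s_{nt}=2\sin\Big(\pi\Big[\frac t{q_n}-|\Lambda_n|\Big(\Big\{\frac{tq_{n-1}}{q_n}\Big\}-\frac12\Big)\Big]\Big).$$
   Context: $\alpha=[0;a_1,a_2,\ldots]$, with convergents given by $q_0=0$, $q_1=1$, $q_{n+1}=a_nq_n+q_{n-1}$ and $p_0=1$, $p_1=0$, $p_{n+1}=a_np_n+p_{n-1}$. $\Lambda_n=q_n\alpha-p_n$. $P_N(\alpha)=\prod_{r=1}^N|2\sin(\pi r\alpha)|$. $\{x\}$ denotes the fractional part of $x$. *)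

theory Defs
  imports Complex_Main
begin

text \<open>Complete quotients of the regular continued fraction of alpha in (0,1):
  x_1 = alpha, x_(k+1) = frac(1/x_k); partial quotients a_k = floor(1/x_k), k >= 1,
  so that alpha = [0; a_1, a_2, ...].\<close>
fun cf_rem :: "real \<Rightarrow> nat \<Rightarrow> real" where
  "cf_rem \<alpha> 0 = \<alpha>"
| "cf_rem \<alpha> (Suc k) = frac (1 / cf_rem \<alpha> k)"

definition cf_a :: "real \<Rightarrow> nat \<Rightarrow> nat" where
  "cf_a \<alpha> k = nat \<lfloor>1 / cf_rem \<alpha> (k - 1)\<rfloor>"

fun cf_q :: "real \<Rightarrow> nat \<Rightarrow> nat" where
  "cf_q \<alpha> 0 = 0"
| "cf_q \<alpha> (Suc 0) = 1"
| "cf_q \<alpha> (Suc (Suc n)) = cf_a \<alpha> (Suc n) * cf_q \<alpha> (Suc n) + cf_q \<alpha> n"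

fun cf_p :: "real \<Rightarrow> nat \<Rightarrow> nat" where
  "cf_p \<alpha> 0 = 1"
| "cf_p \<alpha> (Suc 0) = 0"
| "cf_p \<alpha> (Suc (Suc n)) = cf_a \<alpha> (Suc n) * cf_p \<alpha> (Suc n) + cf_p \<alpha> n"

definition Lambda :: "real \<Rightarrow> nat \<Rightarrow> real" where
  "Lambda \<alpha> n = real (cf_q \<alpha> n) * \<alpha> - real (cf_p \<alpha> n)"

definition sudler :: "nat \<Rightarrow> real \<Rightarrow> real" where
  "sudler N \<alpha> = (\<Prod>r = 1..N. \<bar>2 * sin (pi * real r * \<alpha>)\<bar>)"

definition s_nt :: "real \<Rightarrow> nat \<Rightarrow> nat \<Rightarrow> real" where
  "s_nt \<alpha> n t = 2 * sin (pi * (real t / real (cf_q \<alpha> n)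
      - \<bar>Lambda \<alpha> n\<bar> * (frac (real t * real (cf_q \<alpha> (n - 1)) / real (cf_q \<alpha> n)) - 1/2)))"

end

theory Submission
  imports Defs "HOL-Computational_Algebra.Fundamental_Theorem_Algebra"
begin


lemma cf_rem_props:
  assumes "0 < \<alpha>" "\<alpha> < 1" "\<alpha> \<notin> \<rat>"
  shows "cf_rem \<alpha> k \<notin> \<rat> \<and> 0 < cf_rem \<alpha> k \<and> cf_rem \<alpha> k < 1"
proof (induction k)
  case 0 then show ?case using assms by simp
next
  case (Suc k)
  define x where "x = cf_rem \<alpha> k"
  have x: "x \<notin> \<rat>" "0 < x" "x < 1" using Suc x_def by auto
  have y: "1 / x \<notin> \<rat>"
  proof
    assume "1 / x \<in> \<rat>"
    hence "1 / (1 / x) \<in> \<rat>" by (rule Rats_divide[OF Rats_1])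
    thus False using x by simp
  qed
  have fr: "frac (1/x) \<notin> \<rat>"
  proof
    assume "frac (1/x) \<in> \<rat>"
    hence "frac (1/x) + of_int \<lfloor>1/x\<rfloor> \<in> \<rat>" by (intro Rats_add) auto
    thus False using y by (simp add: frac_def)
  qed
  have "frac (1/x) \<noteq> 0" using fr by (metis Rats_0)
  hence "0 < frac (1/x)" using frac_ge_0[of "1/x"] by linarith
  moreover have "frac (1/x) < 1" by (rule frac_lt_1)
  ultimately show ?case using fr by (simp add: x_def)
qed

lemma cf_a_props:
  assumes "0 < \<alpha>" "\<alpha> < 1" "\<alpha> \<notin> \<rat>"
  shows "cf_a \<alpha> (Suc k) \<ge> 1"
    and "cf_rem \<alpha> (Suc k) = 1 / cf_rem \<alpha> k - real (cf_a \<alpha> (Suc k))"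
proof -
  define x where "x = cf_rem \<alpha> k"
  have x: "0 < x" "x < 1" using cf_rem_props[OF assms, of k] x_def by auto
  have "1 < 1 / x" using x by simp
  hence fl: "\<lfloor>1/x\<rfloor> \<ge> 1" by (simp add: le_floor_iff)
  have a: "cf_a \<alpha> (Suc k) = nat \<lfloor>1/x\<rfloor>" by (simp add: cf_a_def x_def)
  have "nat \<lfloor>1/x\<rfloor> \<ge> nat 1" using fl by (rule nat_mono)
  thus "cf_a \<alpha> (Suc k) \<ge> 1" using a by simp
  have "real (cf_a \<alpha> (Suc k)) = of_int \<lfloor>1/x\<rfloor>" unfolding a using fl
    by (metis of_int_of_nat_eq int_nat_eq zero_le_one order_trans)
  thus "cf_rem \<alpha> (Suc k) = 1 / cf_rem \<alpha> k - real (cf_a \<alpha> (Suc k))"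
    by (simp add: x_def frac_def)
qed

lemma Lambda_rec:
  "Lambda \<alpha> (Suc (Suc n)) = real (cf_a \<alpha> (Suc n)) * Lambda \<alpha> (Suc n) + Lambda \<alpha> n"
  by (simp add: Lambda_def algebra_simps)

lemma Lambda_step:
  assumes "0 < \<alpha>" "\<alpha> < 1" "\<alpha> \<notin> \<rat>"
  shows "Lambda \<alpha> (Suc n) = - cf_rem \<alpha> n * Lambda \<alpha> n"
proof (induction n)
  case 0 then show ?case by (simp add: Lambda_def)
next
  case (Suc n)
  define x where "x = cf_rem \<alpha> n"
  have x: "0 < x" using cf_rem_props[OF assms, of n] x_def by auto
  have ln: "Lambda \<alpha> n = - Lambda \<alpha> (Suc n) / x" using Suc x by (simp add: x_def field_simps)
  have "Lambda \<alpha> (Suc (Suc n)) = real (cf_a \<alpha> (Suc n)) * Lambda \<alpha> (Suc n) - Lambda \<alpha> (Suc n) / x"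
    using Lambda_rec[of \<alpha> n] ln by simp
  also have "\<dots> = - (1 / x - real (cf_a \<alpha> (Suc n))) * Lambda \<alpha> (Suc n)"
    by (simp add: field_simps)
  also have "\<dots> = - cf_rem \<alpha> (Suc n) * Lambda \<alpha> (Suc n)"
    using cf_a_props(2)[OF assms, of n] by (simp add: x_def)
  finally show ?case .
qed

lemma Lambda_sign:
  assumes "0 < \<alpha>" "\<alpha> < 1" "\<alpha> \<notin> \<rat>"
  shows "(-1) ^ Suc n * Lambda \<alpha> n > 0"
proof (induction n)
  case 0 then show ?case by (simp add: Lambda_def)
next
  case (Suc n)
  have "(-1) ^ Suc (Suc n) * Lambda \<alpha> (Suc n) = cf_rem \<alpha> n * ((-1) ^ Suc n * Lambda \<alpha> n)"
    using Lambda_step[OF assms, of n] by simp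
  moreover have "cf_rem \<alpha> n > 0" using cf_rem_props[OF assms, of n] by auto
  ultimately show ?case using Suc by (metis mult_pos_pos)
qed

lemma cf_det:
  "int (cf_p \<alpha> (Suc n)) * int (cf_q \<alpha> n) - int (cf_p \<alpha> n) * int (cf_q \<alpha> (Suc n)) = (-1) ^ Suc n"
proof (induction n)
  case 0 then show ?case by simp
next
  case (Suc n)
  have "int (cf_p \<alpha> (Suc (Suc n))) * int (cf_q \<alpha> (Suc n)) - int (cf_p \<alpha> (Suc n)) * int (cf_q \<alpha> (Suc (Suc n)))
     = - (int (cf_p \<alpha> (Suc n)) * int (cf_q \<alpha> n) - int (cf_p \<alpha> n) * int (cf_q \<alpha> (Suc n)))"
    by (simp add: algebra_simps)
  then show ?case using Suc by simp
qed

lemma cf_q_pos: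
  assumes "0 < \<alpha>" "\<alpha> < 1" "\<alpha> \<notin> \<rat>"
  shows "n \<ge> 1 \<Longrightarrow> cf_q \<alpha> n \<ge> 1 \<and> cf_q \<alpha> n \<le> cf_q \<alpha> (Suc n)"
proof (induction n rule: nat_induct_at_least)
  case base
  then show ?case using cf_a_props(1)[OF assms, of 0] by simp
next
  case (Suc n)
  then obtain m where m: "n = Suc m" by (cases n) auto
  have "cf_q \<alpha> (Suc (Suc n)) = cf_a \<alpha> (Suc n) * cf_q \<alpha> (Suc n) + cf_q \<alpha> n" by simp
  moreover have "cf_a \<alpha> (Suc n) \<ge> 1" using cf_a_props(1)[OF assms] by blast
  ultimately have "cf_q \<alpha> (Suc (Suc n)) \<ge> cf_q \<alpha> (Suc n)"
    by (metis le_add1 mult_le_mono1 mult_1 order_trans)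
  then show ?case using Suc by simp
qed

lemma Lambda_bound:
  assumes "0 < \<alpha>" "\<alpha> < 1" "\<alpha> \<notin> \<rat>"
  shows "real (cf_q \<alpha> (Suc n)) * \<bar>Lambda \<alpha> n\<bar> \<le> 1"
proof -
  have d: "real (cf_q \<alpha> (Suc n)) * Lambda \<alpha> n - real (cf_q \<alpha> n) * Lambda \<alpha> (Suc n) = (-1) ^ Suc n"
  proof -
    have "real (cf_q \<alpha> (Suc n)) * Lambda \<alpha> n - real (cf_q \<alpha> n) * Lambda \<alpha> (Suc n)
        = real_of_int (int (cf_p \<alpha> (Suc n)) * int (cf_q \<alpha> n) - int (cf_p \<alpha> n) * int (cf_q \<alpha> (Suc n)))"
      by (simp add: Lambda_def algebra_simps)
    also have "\<dots> = (-1) ^ Suc n" by (simp only: cf_det) simp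
    finally show ?thesis .
  qed
  have s1: "(-1) ^ Suc n * Lambda \<alpha> n > 0" by (rule Lambda_sign[OF assms])
  have s2: "(-1) ^ Suc (Suc n) * Lambda \<alpha> (Suc n) > 0" by (rule Lambda_sign[OF assms])
  have a1: "\<bar>Lambda \<alpha> n\<bar> = (-1) ^ Suc n * Lambda \<alpha> n"
    using s1 by (cases "even n") auto
  have "(-1) ^ Suc n * (real (cf_q \<alpha> (Suc n)) * Lambda \<alpha> n - real (cf_q \<alpha> n) * Lambda \<alpha> (Suc n)) = 1"
    using d by (simp add: power_mult_distrib[symmetric] flip: power_add)
  hence "real (cf_q \<alpha> (Suc n)) * ((-1) ^ Suc n * Lambda \<alpha> n) + real (cf_q \<alpha> n) * ((-1) ^ Suc (Suc n) * Lambda \<alpha> (Suc n)) = 1"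
    by (simp add: algebra_simps)
  moreover have "real (cf_q \<alpha> n) * ((-1) ^ Suc (Suc n) * Lambda \<alpha> (Suc n)) \<ge> 0"
    using s2 by simp
  moreover have "real (cf_q \<alpha> (Suc n)) * \<bar>Lambda \<alpha> n\<bar> = real (cf_q \<alpha> (Suc n)) * ((-1) ^ Suc n * Lambda \<alpha> n)"
    using a1 by simp
  ultimately show ?thesis by linarith
qed




lemma norm_one_minus_cis: "norm (1 - cis \<theta>) = 2 * \<bar>sin (\<theta> / 2)\<bar>"
proof -
  define a where "a = sin (\<theta>/2)"
  define b where "b = cos (\<theta>/2)"
  have ab: "a^2 + b^2 = 1" by (simp add: a_def b_def)
  have c: "cos \<theta> = 1 - 2 * a^2" using cos_double_sin[of "\<theta>/2"] by (simp add: a_def)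
  have s: "sin \<theta> = 2 * a * b" using sin_double[of "\<theta>/2"] by (simp add: a_def b_def)
  have "(norm (1 - cis \<theta>))\<^sup>2 = (1 - cos \<theta>)\<^sup>2 + (sin \<theta>)\<^sup>2"
    by (simp add: cmod_def)
  also have "\<dots> = 4 * a^2 * (a^2 + b^2)"
    unfolding c s by (simp add: power2_eq_square algebra_simps)
  also have "\<dots> = (2 * \<bar>a\<bar>)\<^sup>2" using ab by (simp add: power2_eq_square)
  finally have "(norm (1 - cis \<theta>))\<^sup>2 = (2 * \<bar>a\<bar>)\<^sup>2" .
  hence "norm (1 - cis \<theta>) = 2 * \<bar>a\<bar>"
    by (rule power2_eq_imp_eq) auto
  thus ?thesis by (simp add: a_def)
qed
lemma prod_one_minus_roots:
  fixes Q :: nat assumes Q: "Q \<ge> 1"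
  shows "(\<Prod>z\<in>{z::complex. z ^ Q = 1} - {1}. 1 - z) = of_nat Q"
proof -
  define p :: "complex poly" where "p = monom 1 Q - 1"
  have polyp: "poly p x = x ^ Q - 1" for x by (simp add: p_def poly_monom)
  have "p \<noteq> 0" using polyp[of 0] Q by (auto simp: power_0_left)
  have cQ: "coeff p Q = 1" using Q by (simp add: p_def coeff_diff coeff_monom coeff_1)
  have "degree p \<le> Q" by (rule degree_le) (auto simp: p_def coeff_diff coeff_monom coeff_1)
  moreover have "Q \<le> degree p" using cQ by (intro le_degree) simp
  ultimately have deg: "degree p = Q" by simp
  have lc: "lead_coeff p = 1" using cQ deg by simp
  have rsq: "rsquarefree p"
    unfolding rsquarefree_roots
  proof (intro allI notI)
    fix a assume h: "poly p a = 0 \<and> poly (pderiv p) a = 0"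
    hence "a ^ Q = 1" using polyp by simp
    hence "a \<noteq> 0" using Q by (auto simp: power_0_left)
    moreover have "poly (pderiv p) a = of_nat Q * a ^ (Q - 1)"
      by (simp add: p_def pderiv_diff pderiv_monom poly_monom)
    ultimately show False using h Q by auto
  qed
  define S where "S = {z::complex. z ^ Q = 1}"
  have finS: "finite S" unfolding S_def using Q by (intro finite_roots_unity) auto
  have "1 \<in> S" by (simp add: S_def)
  have rootsS: "{z. poly p z = 0} = S" by (auto simp: S_def polyp)
  have pe: "p = (\<Prod>z\<in>S. [:-z, 1:])"
    using complex_poly_decompose_rsquarefree[OF rsq] lc rootsS by simp
  also have "\<dots> = [:-1, 1:] * (\<Prod>z\<in>S - {1}. [:-z, 1:])"
    using finS \<open>1 \<in> S\<close> by (simp add: prod.remove)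
  finally have e1: "p = [:-1, 1:] * (\<Prod>z\<in>S - {1}. [:-z, 1:])" .
  have e2: "p = [:-1, 1:] * (\<Sum>k<Q. monom 1 k)"
  proof -
    have "poly p = poly ([:-1, 1:] * (\<Sum>k<Q. monom 1 k))"
    proof
      fix x show "poly p x = poly ([:-1, 1:] * (\<Sum>k<Q. monom 1 k)) x"
        by (simp add: polyp poly_sum poly_monom power_diff_1_eq algebra_simps)
    qed
    thus ?thesis by (simp add: poly_eq_poly_eq_iff)
  qed
  have "(\<Prod>z\<in>S - {1}. [:-z, 1:]) = (\<Sum>k<Q. monom (1::complex) k)"
  proof -
    have "[:-1, 1:] \<noteq> (0::complex poly)" by simp
    moreover have "[:-1, 1:] * (\<Prod>z\<in>S - {1}. [:-z, 1:]) = [:-1, 1:] * (\<Sum>k<Q. monom (1::complex) k)"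
      using e1 e2 by metis
    ultimately show ?thesis using mult_left_cancel by blast
  qed
  hence "poly (\<Prod>z\<in>S - {1}. [:-z, 1:]) 1 = poly (\<Sum>k<Q. monom (1::complex) k) 1" by (rule arg_cong)
  thus ?thesis by (simp add: poly_prod poly_sum poly_monom S_def)
qed

lemma prod_2sin:
  fixes Q :: nat assumes Q: "Q \<ge> 1"
  shows "(\<Prod>k\<in>{1..<Q}. 2 * sin (pi * real k / real Q)) = real Q"
proof -
  define f where "f = (\<lambda>k::nat. cis (2 * pi * real k / real Q))"
  have bij: "bij_betw f {..<Q} {z. z ^ Q = 1}" unfolding f_def
    using bij_betw_roots_unity[of Q] Q by simp
  have inj: "inj_on f {..<Q}" using bij by (simp add: bij_betw_def)
  have f0: "f 0 = 1" by (simp add: f_def)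
  have "{1..<Q} = {..<Q} - {0}" by auto
  hence img: "f ` {1..<Q} = {z. z ^ Q = 1} - {1}"
    using inj_on_image_set_diff[OF inj, of "{..<Q}" "{0}"] bij f0 Q
    by (auto simp: bij_betw_def)
  have inj1: "inj_on f {1..<Q}" using inj by (rule inj_on_subset) auto
  have "real Q = norm (of_nat Q :: complex)" by simp
  also have "\<dots> = norm (\<Prod>z\<in>{z::complex. z ^ Q = 1} - {1}. 1 - z)"
    using prod_one_minus_roots[OF Q] by simp
  also have "\<dots> = (\<Prod>z\<in>{z::complex. z ^ Q = 1} - {1}. norm (1 - z))"
    by (simp add: prod_norm)
  also have "\<dots> = (\<Prod>k\<in>{1..<Q}. norm (1 - f k))"
    unfolding img[symmetric] using prod.reindex[OF inj1] by simp
  also have "\<dots> = (\<Prod>k\<in>{1..<Q}. 2 * sin (pi * real k / real Q))"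
  proof (rule prod.cong[OF refl])
    fix k assume k: "k \<in> {1..<Q}"
    have "norm (1 - f k) = 2 * \<bar>sin (pi * real k / real Q)\<bar>"
      unfolding f_def norm_one_minus_cis by simp
    moreover have "sin (pi * real k / real Q) > 0"
      using k by (intro sin_gt_zero) (auto simp: field_simps)
    ultimately show "norm (1 - f k) = 2 * sin (pi * real k / real Q)" by simp
  qed
  finally show ?thesis by simp
qed



lemma frac_nat_div:
  assumes "Q > 0" shows "frac (real a / real Q) = real (a mod Q) / real Q"
proof -
  have "real a = real Q * real (a div Q) + real (a mod Q)"
    by (metis of_nat_add of_nat_mult div_mult_mod_eq mult.commute)
  hence e: "real a / real Q - real (a mod Q) / real Q = of_int (int (a div Q))"
    using assms by (simp add: field_simps)
  have lt: "real (a mod Q) < real Q" using assms by simp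
  show ?thesis unfolding frac_unique_iff using e assms lt by auto
qed

lemma sin_lower:
  fixes u v :: real
  assumes "0 < v" "v \<le> 1/2" "v \<le> u" "u \<le> 1 - v"
  shows "0 < sin (pi*v) \<and> sin (pi*v) \<le> sin (pi*u)"
proof
  show "0 < sin (pi*v)" using assms by (intro sin_gt_zero) auto
  show "sin (pi*v) \<le> sin (pi*u)"
  proof (cases "u \<le> 1/2")
    case True
    have "pi*v \<ge> 0" using assms by simp
    moreover have "pi*v \<le> pi*u" using assms by simp
    moreover have "pi*u \<le> pi*(1/2)" using True by (intro mult_left_mono) auto
    ultimately show ?thesis using pi_gt_zero by (intro sin_monotone_2pi_le) linarith+
  next
    case False
    have "sin (pi*u) = sin (pi*(1-u))" using sin_pi_minus[of "pi*u"] by (simp add: algebra_simps)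
    moreover have "sin (pi*v) \<le> sin (pi*(1-u))"
    proof -
      have "pi*v \<ge> 0" using assms by simp
      moreover have "pi*v \<le> pi*(1-u)" using assms by simp
      moreover have "pi*(1-u) \<le> pi*(1/2)" using False by (intro mult_left_mono) auto
      ultimately show ?thesis using pi_gt_zero by (intro sin_monotone_2pi_le) linarith+
    qed
    ultimately show ?thesis by simp
  qed
qed

lemma abs_sin_add_int_pi: "\<bar>sin (x + of_int k * pi)\<bar> = \<bar>sin x\<bar>"
proof -
  have s: "sin (of_int k * pi) = 0" by (simp add: sin_times_pi_eq_0)
  have "(cos (of_int k * pi))\<^sup>2 = 1" using sin_cos_squared_add[of "of_int k * pi"] s by simp
  hence "\<bar>cos (of_int k * pi)\<bar> = 1" by (metis abs_power2 power2_eq_1_iff abs_1 abs_neg_one)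
  thus ?thesis by (simp add: sin_add s abs_mult)
qed

lemma prod_sq_aux:
  fixes x y c d :: real
  assumes "c^2 = 1 - d^2" "y^2 = 1 - x^2"
  shows "(x*c + y*d)*(x*c - y*d) = x^2 - d^2"
proof -
  have "(x*c + y*d)*(x*c - y*d) = x^2*c^2 - y^2*d^2" by (simp add: power2_eq_square algebra_simps)
  also have "\<dots> = x^2*(1-d^2) - (1-x^2)*d^2" using assms by simp
  also have "\<dots> = x^2 - d^2" by (simp add: algebra_simps)
  finally show ?thesis .
qed

lemma sin_sq_diff: fixes a b :: real shows "sin (a + b) * sin (a - b) = (sin a)^2 - (sin b)^2"
  using prod_sq_aux[of "cos b" "sin b" "cos a" "sin a"]
  by (simp add: sin_add sin_diff cos_squared_eq)

lemma prod_reflect: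
  fixes T :: "nat \<Rightarrow> real"
  shows "(\<Prod>t\<in>{1..<Q}. T (Q - t)) = (\<Prod>t\<in>{1..<Q}. T t)"
  by (rule prod.reindex_bij_witness[where i="\<lambda>t. Q - t" and j="\<lambda>t. Q - t"]) auto




theorem lemma3p1:
  fixes \<alpha> :: real and n :: nat
  assumes "0 < \<alpha>" and "\<alpha> < 1" and "\<alpha> \<notin> \<rat>" and "n \<ge> 1"
  shows "sudler (cf_q \<alpha> n) \<alpha> =
      \<bar>2 * real (cf_q \<alpha> n) * sin (pi * Lambda \<alpha> n)\<bar>
    * \<bar>\<Prod>t = 1..cf_q \<alpha> n - 1. s_nt \<alpha> n t / (2 * sin (pi * real t / real (cf_q \<alpha> n)))\<bar>
    * (\<Prod>t = 1..cf_q \<alpha> n - 1. sqrt (1 - (s_nt \<alpha> n 0)\<^sup>2 / (s_nt \<alpha> n t)\<^sup>2))"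
proof -
  note A = assms(1-3)
  obtain m where n: "n = Suc m" using assms(4) by (cases n) auto
  define Q where "Q = cf_q \<alpha> n"
  define Q' where "Q' = cf_q \<alpha> m"
  define P where "P = cf_p \<alpha> n"
  define L where "L = Lambda \<alpha> n"
  have Q1: "Q \<ge> 1" and Qmono: "Q \<le> cf_q \<alpha> (Suc n)"
    using cf_q_pos[OF A, of n] assms(4) Q_def by auto
  have Qpos: "real Q > 0" using Q1 by simp
  have QL: "real Q * \<bar>L\<bar> \<le> 1"
  proof -
    have "real Q * \<bar>L\<bar> \<le> real (cf_q \<alpha> (Suc n)) * \<bar>L\<bar>"
      using Qmono by (intro mult_right_mono) auto
    thus ?thesis using Lambda_bound[OF A, of n] L_def by simp
  qed
  have sgn: "(-1) ^ Suc n * L > 0" using Lambda_sign[OF A, of n] L_def by simp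
  have Lnz: "L \<noteq> 0" using sgn by auto
  have QaPL: "real Q * \<alpha> = real P + L" by (simp add: L_def Lambda_def Q_def P_def)
  define \<epsilon> :: int where "\<epsilon> = (-1) ^ n"
  have det: "int P * int Q' = \<epsilon> + int (cf_p \<alpha> m) * int Q"
    using cf_det[of \<alpha> m] unfolding P_def Q'_def Q_def \<epsilon>_def n by linarith
  have eps2: "\<epsilon> * \<epsilon> = 1" by (simp add: \<epsilon>_def flip: power_add)
  have Leps: "real_of_int \<epsilon> * L = - \<bar>L\<bar>"
  proof (cases "even n")
    case True
    then show ?thesis using sgn by (simp add: \<epsilon>_def)
  next
    case False
    then show ?thesis using sgn by (simp add: \<epsilon>_def)
  qed
  define R where "R t = (if t = 0 then Q else nat ((\<epsilon> * int t * int Q') mod int Q))" for t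
  have Rcong: "\<exists>k. int (R t) * int P = int t + int Q * k" for t
  proof (cases "t = 0")
    case True
    then show ?thesis by (intro exI[of _ "int P"]) (simp add: R_def)
  next
    case False
    define M where "M = \<epsilon> * int t * int Q'"
    have "M mod int Q \<ge> 0" using Q1 by simp
    hence RM: "int (R t) = M - int Q * (M div int Q)" using False
      by (simp add: R_def M_def minus_div_mult_eq_mod[symmetric] mult.commute)
    have "int (R t) * int P = \<epsilon> * int t * (int P * int Q') - int Q * (M div int Q) * int P"
      unfolding RM M_def by (simp add: algebra_simps)
    also have "\<dots> = (\<epsilon> * \<epsilon>) * int t + int Q * (\<epsilon> * int t * int (cf_p \<alpha> m) - (M div int Q) * int P)"
      unfolding det by (simp add: algebra_simps)
    finally have "int (R t) * int P = int t + int Q * (\<epsilon> * int t * int (cf_p \<alpha> m) - (M div int Q) * int P)"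
      using eps2 by simp
    thus ?thesis by (rule exI)
  qed
  have Rrange: "R t \<in> {1..<Q}" if t: "t \<in> {1..<Q}" for t
  proof -
    have "(\<epsilon> * int t * int Q') mod int Q < int Q" "(\<epsilon> * int t * int Q') mod int Q \<ge> 0" using Q1 by simp_all
    hence "R t < Q" using t by (simp add: R_def nat_less_iff)
    moreover have "R t \<noteq> 0"
    proof
      assume "R t = 0"
      then obtain k where "0 = int t + int Q * k" using Rcong[of t] by auto
      hence "int t = int Q * (-k)" by simp
      hence "int Q dvd int t" by (rule dvdI)
      hence "Q dvd t" by simp
      thus False using t by (auto dest: dvd_imp_le)
    qed
    ultimately show ?thesis by auto
  qed
  have Rinj: "inj_on R {0..<Q}"
  proof
    fix a b assume a: "a \<in> {0..<Q}" and b: "b \<in> {0..<Q}" and e: "R a = R b"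
    obtain ka where ka: "int (R a) * int P = int a + int Q * ka" using Rcong by blast
    obtain kb where kb: "int (R b) * int P = int b + int Q * kb" using Rcong by blast
    have "int a = (int a + int Q * ka) mod int Q" using a by simp
    also have "\<dots> = (int b + int Q * kb) mod int Q" using ka kb e by simp
    also have "\<dots> = int b" using b by simp
    finally show "a = b" by simp
  qed
  have Rimg: "R ` {0..<Q} = {1..Q}"
  proof (rule card_subset_eq)
    show "R ` {0..<Q} \<subseteq> {1..Q}"
    proof
      fix r assume "r \<in> R ` {0..<Q}"
      then obtain t where t: "t \<in> {0..<Q}" "r = R t" by auto
      show "r \<in> {1..Q}"
      proof (cases "t = 0")
        case True then show ?thesis using t Q1 by (simp add: R_def)
      next
        case False then show ?thesis using t Rrange[of t] by auto
      qed
    qed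
    show "card (R ` {0..<Q}) = card {1..Q}" using card_image[OF Rinj] by simp
  qed simp
  have bij: "bij_betw R {0..<Q} {1..Q}" using Rinj Rimg by (simp add: bij_betw_def)
  define g where "g r = \<bar>2 * sin (pi * real r * \<alpha>)\<bar>" for r :: nat
  have "sudler Q \<alpha> = (\<Prod>t\<in>{0..<Q}. g (R t))"
    unfolding sudler_def g_def[symmetric] by (rule prod.reindex_bij_betw[OF bij, symmetric])
  also have "\<dots> = g (R 0) * (\<Prod>t\<in>{1..<Q}. g (R t))"
    using Q1 by (subst prod.atLeast_Suc_lessThan) auto
  finally have sud1: "sudler Q \<alpha> = g (R 0) * (\<Prod>t\<in>{1..<Q}. g (R t))" .
  have g0: "g (R 0) = \<bar>2 * sin (pi * L)\<bar>"
  proof -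
    have "pi * real Q * \<alpha> = pi * L + of_int (int P) * pi"
      using QaPL by (simp add: algebra_simps mult.assoc[symmetric])
    hence "\<bar>sin (pi * real Q * \<alpha>)\<bar> = \<bar>sin (pi * L)\<bar>" using abs_sin_add_int_pi[of "pi * L" "int P"] by simp
    thus ?thesis by (simp add: g_def R_def abs_mult)
  qed

  define f where "f t = frac (real t * real Q' / real Q)" for t :: nat
  define u where "u t = real t / real Q - \<bar>L\<bar> * (f t - 1/2)" for t
  define s where "s t = s_nt \<alpha> n t" for t
  have snt: "s t = 2 * sin (pi * u t)" for t
    by (simp add: s_def s_nt_def u_def f_def Q_def Q'_def L_def n)
  have s0: "s 0 = 2 * sin (pi * (\<bar>L\<bar>/2))" using snt[of 0] by (simp add: u_def f_def)
  have fw: "f t = real (t*Q' mod Q) / real Q" for t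
    using frac_nat_div[of Q "t*Q'"] Q1 by (simp add: f_def)
  have wnz: "t*Q' mod Q \<noteq> 0" if t: "t \<in> {1..<Q}" for t
  proof
    assume "t*Q' mod Q = 0"
    hence "Q dvd t*Q'" by auto
    hence "int Q dvd int t * int Q'" by (metis of_nat_dvd_iff of_nat_mult)
    hence "int Q dvd \<epsilon> * int t * int Q'" by (metis dvd_mult mult.assoc)
    hence "(\<epsilon> * int t * int Q') mod int Q = 0" by simp
    hence "R t = 0" using t by (simp add: R_def)
    thus False using Rrange[OF t] by simp
  qed
  have Rrel: "real (R t) * L / real Q = L/2 - \<bar>L\<bar> * (f t - 1/2)" if t: "t \<in> {1..<Q}" for t
  proof -
    define w where "w = t*Q' mod Q"
    have w: "0 < w" "w < Q" using wnz[OF t] Q1 by (auto simp: w_def)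
    have iw: "int t * int Q' mod int Q = int w" by (simp add: w_def of_nat_mod)
    have ft: "f t = real w / real Q" using fw w_def by simp
    show ?thesis
    proof (cases "even n")
      case True
      hence e: "\<epsilon> = 1" by (simp add: \<epsilon>_def)
      hence "R t = w" using t iw by (simp add: R_def)
      moreover have "\<bar>L\<bar> = - L" using Leps e by simp
      ultimately show ?thesis unfolding ft using Qpos by (simp add: field_simps)
    next
      case False
      hence e: "\<epsilon> = -1" by (simp add: \<epsilon>_def)
      have "(\<epsilon> * int t * int Q') mod int Q = (- (int t * int Q')) mod int Q" using e by simp
      also have "\<dots> = int Q - int w" using iw w by (simp add: zmod_zminus1_eq_if)
      finally have "R t = Q - w" using t w by (simp add: R_def)
      hence rr: "real (R t) = real Q - real w" using w by simp
      have "\<bar>L\<bar> = L" using Leps e by simp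
      thus ?thesis unfolding ft rr using Qpos by (simp add: field_simps)
    qed
  qed
  have alpha_eq: "\<alpha> = (real P + L) / real Q" using QaPL Qpos by (simp add: field_simps)
  have gR: "g (R t) = \<bar>2 * sin (pi * (u t + L/2))\<bar>" if t: "t \<in> {1..<Q}" for t
  proof -
    obtain k where k: "int (R t) * int P = int t + int Q * k" using Rcong by blast
    hence kr: "real (R t) * real P = real t + real Q * of_int k"
      by (metis of_int_add of_int_mult of_int_of_nat_eq)
    have "real (R t) * \<alpha> = real (R t) * real P / real Q + real (R t) * L / real Q"
      unfolding alpha_eq by (simp add: add_divide_distrib distrib_left)
    also have "\<dots> = real t / real Q + of_int k + (L/2 - \<bar>L\<bar> * (f t - 1/2))"
      unfolding kr Rrel[OF t] using Qpos by (simp add: field_simps)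
    also have "\<dots> = u t + L/2 + of_int k" by (simp add: u_def)
    finally have "pi * real (R t) * \<alpha> = pi * (u t + L/2) + of_int k * pi"
      by (simp add: algebra_simps mult.assoc[symmetric])
    hence "\<bar>sin (pi * real (R t) * \<alpha>)\<bar> = \<bar>sin (pi * (u t + L/2))\<bar>"
      using abs_sin_add_int_pi[of "pi * (u t + L/2)" k] by simp
    thus ?thesis by (simp add: g_def abs_mult)
  qed
  have frefl: "f (Q - t) = 1 - f t" if t: "t \<in> {1..<Q}" for t
  proof -
    have "real (Q - t) * real Q' / real Q = of_int (int Q') + (- (real t * real Q' / real Q))"
      using t Qpos by (simp add: of_nat_diff field_simps)
    hence "f (Q - t) = frac (of_int (int Q') + (- (real t * real Q' / real Q)))" unfolding f_def by (simp only:)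
    also have "\<dots> = frac (- (real t * real Q' / real Q))" by (rule frac_add_of_int_left)
    also have "\<dots> = 1 - f t"
    proof -
      have "f t \<noteq> 0" using fw[of t] wnz[OF t] Qpos by simp
      thus ?thesis unfolding f_def by (rule frac_non_zero)
    qed
    finally show ?thesis .
  qed
  have urefl: "u (Q - t) = 1 - u t" if t: "t \<in> {1..<Q}" for t
  proof -
    have "real (Q - t) / real Q = 1 - real t / real Q" using t Qpos by (simp add: of_nat_diff field_simps)
    thus ?thesis unfolding u_def frefl[OF t] by (simp add: algebra_simps)
  qed
  define T where "T t = \<bar>2 * sin (pi * (u t + L/2))\<bar>" for t
  have Trefl: "T (Q - t) = \<bar>2 * sin (pi * (u t - L/2))\<bar>" if t: "t \<in> {1..<Q}" for t
  proof -
    have "pi * (u (Q - t) + L/2) = pi - pi * (u t - L/2)" unfolding urefl[OF t] by (simp add: algebra_simps)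
    thus ?thesis unfolding T_def by (simp add: sin_pi_minus)
  qed
  have Lle: "\<bar>L\<bar> \<le> 1 / real Q" using QL Qpos by (simp add: field_simps)
  have Lpos: "0 < \<bar>L\<bar>/2" using Lnz by simp
  have "\<bar>L\<bar> * 1 \<le> \<bar>L\<bar> * real Q" using Q1 by (intro mult_left_mono) auto
  hence Lhalf: "\<bar>L\<bar>/2 \<le> 1/2" using QL by (simp add: mult.commute)
  have bounds: "\<bar>L\<bar>/2 \<le> u t \<and> u t \<le> 1 - \<bar>L\<bar>/2" if t: "t \<in> {1..<Q}" for t
  proof -
    have f01: "0 \<le> f t" "f t < 1" by (simp_all add: f_def frac_lt_1)
    have b1: "\<bar>L\<bar> * (f t - 1/2) \<le> \<bar>L\<bar> * (1/2)" using f01 by (intro mult_left_mono) auto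
    have b2: "\<bar>L\<bar> * (-1/2) \<le> \<bar>L\<bar> * (f t - 1/2)" using f01 by (intro mult_left_mono) auto
    have t1: "1 / real Q \<le> real t / real Q" using t Qpos by (simp add: divide_right_mono)
    have "real t \<le> real Q - 1" using t by auto
    hence t2: "real t / real Q \<le> 1 - 1 / real Q" using Qpos by (simp add: field_simps)
    show ?thesis unfolding u_def using b1 b2 t1 t2 Lle by linarith
  qed
  have s0pos: "s 0 > 0" unfolding s0 using Lpos Lhalf by (intro mult_pos_pos sin_gt_zero) auto
  have sle: "s 0 \<le> s t" if t: "t \<in> {1..<Q}" for t
    using sin_lower[OF Lpos Lhalf, of "u t"] bounds[OF t] unfolding s0 snt[of t] by auto

  define x where "x t = s t * sqrt (1 - (s 0)^2 / (s t)^2)" for t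
  have L2: "(sin (pi*(\<bar>L\<bar>/2)))^2 = (sin (pi*(L/2)))^2"
  proof (cases "L \<ge> 0")
    case True then show ?thesis by simp
  next
    case False
    hence "pi*(\<bar>L\<bar>/2) = - (pi*(L/2))" by simp
    thus ?thesis by (simp only: sin_minus power2_minus)
  qed
  have TT: "T t * T (Q - t) = (x t)^2" if t: "t \<in> {1..<Q}" for t
  proof -
    have st: "s t > 0" using s0pos sle[OF t] by linarith
    have sq: "(s 0)^2 \<le> (s t)^2" using s0pos sle[OF t] by (intro power_mono) auto
    have e4: "(s t)^2 - (s 0)^2 = 4 * ((sin (pi * u t))^2 - (sin (pi*(L/2)))^2)"
      unfolding snt[of t] s0 L2[symmetric] by (simp add: power_mult_distrib algebra_simps)
    have "T t * T (Q - t) = \<bar>2 * sin (pi * u t + pi*(L/2))\<bar> * \<bar>2 * sin (pi * u t - pi*(L/2))\<bar>"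
      unfolding Trefl[OF t] unfolding T_def by (simp add: distrib_left right_diff_distrib)
    also have "\<dots> = \<bar>4 * (sin (pi * u t + pi*(L/2)) * sin (pi * u t - pi*(L/2)))\<bar>"
      by (simp add: abs_mult)
    also have "\<dots> = \<bar>4 * ((sin (pi * u t))^2 - (sin (pi*(L/2)))^2)\<bar>"
      by (simp only: sin_sq_diff)
    also have "\<dots> = (s t)^2 - (s 0)^2" unfolding e4[symmetric] using sq by simp
    also have "\<dots> = (x t)^2"
    proof -
      have nn: "0 \<le> 1 - (s 0)^2 / (s t)^2" using sq st by (simp add: divide_le_eq_1)
      have "(x t)^2 = (s t)^2 * (1 - (s 0)^2 / (s t)^2)"
        unfolding x_def power_mult_distrib using nn by simp
      also have "\<dots> = (s t)^2 - (s 0)^2" using st by (simp add: field_simps)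
      finally show ?thesis by simp
    qed
    finally show ?thesis .
  qed
  have xnn: "x t \<ge> 0" if t: "t \<in> {1..<Q}" for t
  proof -
    have st: "s t > 0" using s0pos sle[OF t] by linarith
    have sq: "(s 0)^2 \<le> (s t)^2" using s0pos sle[OF t] by (intro power_mono) auto
    have nn: "0 \<le> 1 - (s 0)^2 / (s t)^2" using sq st by (simp add: divide_le_eq_1)
    thus ?thesis unfolding x_def using st by simp
  qed
  have prodT: "(\<Prod>t\<in>{1..<Q}. T t) = (\<Prod>t\<in>{1..<Q}. x t)"
  proof -
    have "(\<Prod>t\<in>{1..<Q}. T t)^2 = (\<Prod>t\<in>{1..<Q}. T t) * (\<Prod>t\<in>{1..<Q}. T (Q - t))"
      using prod_reflect[of T Q] by (simp add: power2_eq_square)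
    also have "\<dots> = (\<Prod>t\<in>{1..<Q}. T t * T (Q - t))" by (simp add: prod.distrib)
    also have "\<dots> = (\<Prod>t\<in>{1..<Q}. (x t)^2)" by (rule prod.cong) (auto simp: TT)
    also have "\<dots> = (\<Prod>t\<in>{1..<Q}. x t)^2" by (simp add: prod_power_distrib)
    finally show ?thesis
      by (rule power2_eq_imp_eq) (auto intro!: prod_nonneg simp: T_def xnn)
  qed
  have spos: "s t > 0" if t: "t \<in> {1..<Q}" for t using s0pos sle[OF t] by linarith
  have sud: "sudler Q \<alpha> = \<bar>2 * sin (pi * L)\<bar> * ((\<Prod>t\<in>{1..<Q}. s t) * (\<Prod>t\<in>{1..<Q}. sqrt (1 - (s 0)^2 / (s t)^2)))"
  proof -
    have "(\<Prod>t\<in>{1..<Q}. g (R t)) = (\<Prod>t\<in>{1..<Q}. T t)"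
      by (rule prod.cong) (auto simp: gR T_def)
    also have "\<dots> = (\<Prod>t\<in>{1..<Q}. s t) * (\<Prod>t\<in>{1..<Q}. sqrt (1 - (s 0)^2 / (s t)^2))"
      unfolding prodT x_def by (simp add: prod.distrib)
    finally show ?thesis using sud1 g0 by simp
  qed
  have ivl: "{1..Q - 1} = {1..<Q}" using Q1 by auto
  have sprod_pos: "(\<Prod>t\<in>{1..<Q}. s t) > 0" by (rule prod_pos) (use spos in auto)
  have quot: "(\<Prod>t\<in>{1..<Q}. s t / (2 * sin (pi * real t / real Q))) = (\<Prod>t\<in>{1..<Q}. s t) / real Q"
    by (simp only: prod_dividef prod_2sin[OF Q1])
  have "sudler Q \<alpha> = \<bar>2 * real Q * sin (pi * L)\<bar>
      * \<bar>\<Prod>t = 1..Q - 1. s t / (2 * sin (pi * real t / real Q))\<bar>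
      * (\<Prod>t = 1..Q - 1. sqrt (1 - (s 0)\<^sup>2 / (s t)\<^sup>2))"
    unfolding ivl quot sud using sprod_pos Qpos by (simp add: abs_mult)
  thus ?thesis by (simp only: Q_def L_def s_def)
qed

end
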